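(* Let $(x_n)_{n\in\mathbb N}$ be a block sequence in $J$, let $0<\epsilon<1$ and $\alpha>0$. Assume $I_\infty^*(x_n)=0$ and $\big|\|x_n\|-\alpha\big|<\alpha\epsilon$ for all $n$. Then for every finitely supported sequence of reals $(\lambda_n)$, $(1-\epsilon)\alpha\big(\sum_n\lambda_n^2\big)^{1/2}\le\big\|\sum_n\lambda_nx_n\big\|\le\sqrt2(1+\epsilon)\alpha\big(\sum_n\lambda_n^2\big)^{1/2}$. In particular $(x_n)$ is equivalent to the unit vector basis of $\ell_2$.
   Context: The James space $J$ is the space of real sequences $x=(x(n))_{n\in\mathbb N}$ with $\|x\|=\sup\big(\sum_{i=1}^m|\sum_{k\in I_i}x(k)|^2\big)^{1/2}<\infty$, the supremum taken over all $m$ and all pairwise disjoint finite intervals $I_1,\dots,I_m$ of $\mathbb N$. The unit vectors $(e_n)$ form a basis of $J$; a block sequence is a sequence of nonzero finitely supported vectors with $\max\operatorname{supp}x_n<\min\operatorname{supp}x_{n+1}$. $I_\infty^*\in J^*$ is the functional $I_\infty^*(x)=\sum_{n=1}^\infty x(n)$. *)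

theory Defs
  imports "HOL-Analysis.Analysis"
begin

definition fin_interval :: "nat set \<Rightarrow> bool" where
  "fin_interval I \<longleftrightarrow> (\<exists>a b. a \<le> b \<and> I = {a..b})"

definition interval_families :: "nat set set set" where
  "interval_families = {P. finite P \<and> (\<forall>I\<in>P. fin_interval I) \<and> pairwise disjnt P}"

definition james_norm :: "(nat \<Rightarrow> real) \<Rightarrow> real" where
  "james_norm x = (SUP P \<in> interval_families. sqrt (\<Sum>I\<in>P. (\<Sum>k\<in>I. x k)\<^sup>2))"

definition in_James :: "(nat \<Rightarrow> real) \<Rightarrow> bool" where
  "in_James x \<longleftrightarrow> bdd_above ((\<lambda>P. sqrt (\<Sum>I\<in>P. (\<Sum>k\<in>I. x k)\<^sup>2)) ` interval_families)"

definition supp :: "(nat \<Rightarrow> real) \<Rightarrow> nat set" where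
  "supp x = {k. x k \<noteq> 0}"

definition I_infty :: "(nat \<Rightarrow> real) \<Rightarrow> real" where
  "I_infty x = (\<Sum>n. x n)"

definition block_sequence :: "(nat \<Rightarrow> nat \<Rightarrow> real) \<Rightarrow> bool" where
  "block_sequence xs \<longleftrightarrow>
     (\<forall>n. xs n \<noteq> (\<lambda>_. 0) \<and> finite (supp (xs n))) \<and>
     (\<forall>n. Max (supp (xs n)) < Min (supp (xs (Suc n))))"

end

theory Submission imports Defs begin

definition jv :: "(nat \<Rightarrow> real) \<Rightarrow> nat set set \<Rightarrow> real" where
  "jv x P = sqrt (\<Sum>I\<in>P. (\<Sum>k\<in>I. x k)\<^sup>2)"

lemma fam_empty: "{} \<in> interval_families"
  by (simp add: interval_families_def)

lemma fam_finite_int: "P \<in> interval_families \<Longrightarrow> I \<in> P \<Longrightarrow> finite I"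
  by (auto simp: interval_families_def fin_interval_def)

lemma sum_sq_le_sq_sum:
  fixes a :: "'a \<Rightarrow> real"
  assumes "finite A" "\<And>i. i \<in> A \<Longrightarrow> a i \<ge> 0"
  shows "(\<Sum>i\<in>A. (a i)\<^sup>2) \<le> (\<Sum>i\<in>A. a i)\<^sup>2"
proof -
  have "(\<Sum>i\<in>A. (a i)\<^sup>2) \<le> (\<Sum>i\<in>A. a i * (\<Sum>j\<in>A. a j))"
  proof (rule sum_mono)
    fix i assume i: "i \<in> A"
    have "a i \<le> (\<Sum>j\<in>A. a j)" using member_le_sum[OF i] assms by auto
    then show "(a i)\<^sup>2 \<le> a i * (\<Sum>j\<in>A. a j)" using assms(2)[OF i]
      by (simp add: power2_eq_square mult_left_mono)
  qed
  also have "\<dots> = (\<Sum>i\<in>A. a i)\<^sup>2" by (simp add: power2_eq_square sum_distrib_right)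
  finally show ?thesis .
qed

lemma jv_bound:
  assumes fin: "finite (supp x)" and P: "P \<in> interval_families"
  shows "jv x P \<le> (\<Sum>k\<in>supp x. \<bar>x k\<bar>)"
proof -
  have finP: "finite P" and fI: "\<And>I. I \<in> P \<Longrightarrow> finite I" and dj: "pairwise disjnt P"
    using P fam_finite_int by (auto simp: interval_families_def)
  have "(\<Sum>I\<in>P. (\<Sum>k\<in>I. x k)\<^sup>2) = (\<Sum>I\<in>P. (\<bar>\<Sum>k\<in>I. x k\<bar>)\<^sup>2)" by simp
  also have "\<dots> \<le> (\<Sum>I\<in>P. \<bar>\<Sum>k\<in>I. x k\<bar>)\<^sup>2"
    by (rule sum_sq_le_sq_sum[OF finP]) auto
  finally have S: "(\<Sum>I\<in>P. (\<Sum>k\<in>I. x k)\<^sup>2) \<le> (\<Sum>I\<in>P. \<bar>\<Sum>k\<in>I. x k\<bar>)\<^sup>2" .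
  have "(\<Sum>I\<in>P. \<bar>\<Sum>k\<in>I. x k\<bar>) \<le> (\<Sum>I\<in>P. \<Sum>k\<in>I. \<bar>x k\<bar>)"
    by (intro sum_mono sum_abs)
  also have "\<dots> = (\<Sum>k\<in>\<Union>P. \<bar>x k\<bar>)"
    using sum.Union_disjoint[of P "\<lambda>k. \<bar>x k\<bar>"] fI dj by (auto simp: pairwise_def disjnt_def)
  also have "\<dots> = (\<Sum>k\<in>\<Union>P \<inter> supp x. \<bar>x k\<bar>)"
    by (rule sum.mono_neutral_right) (use fI finP in \<open>auto simp: supp_def\<close>)
  also have "\<dots> \<le> (\<Sum>k\<in>supp x. \<bar>x k\<bar>)"
    by (rule sum_mono2[OF fin]) auto
  finally have T: "(\<Sum>I\<in>P. \<bar>\<Sum>k\<in>I. x k\<bar>) \<le> (\<Sum>k\<in>supp x. \<bar>x k\<bar>)" .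
  have T0: "0 \<le> (\<Sum>I\<in>P. \<bar>\<Sum>k\<in>I. x k\<bar>)" by (simp add: sum_nonneg)
  have "(\<Sum>I\<in>P. (\<Sum>k\<in>I. x k)\<^sup>2) \<le> (\<Sum>k\<in>supp x. \<bar>x k\<bar>)\<^sup>2"
    using S power_mono[OF T T0, of 2] by linarith
  then show ?thesis unfolding jv_def
    by (metis abs_of_nonneg real_sqrt_abs real_sqrt_le_mono sum_abs_ge_zero)
qed

lemma jv_bdd: "finite (supp x) \<Longrightarrow> bdd_above (jv x ` interval_families)"
  using jv_bound by (meson bdd_aboveI2)

lemma jn_eq: "james_norm x = (SUP P\<in>interval_families. jv x P)"
  unfolding james_norm_def jv_def ..

lemma jv_le_jn: "finite (supp x) \<Longrightarrow> P \<in> interval_families \<Longrightarrow> jv x P \<le> james_norm x"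
  unfolding jn_eq by (rule cSUP_upper) (auto intro: jv_bdd)

lemma jv_nonneg: "jv x P \<ge> 0" unfolding jv_def by (simp add: sum_nonneg)

lemma jn_nonneg: "finite (supp x) \<Longrightarrow> james_norm x \<ge> 0"
  using jv_le_jn[OF _ fam_empty, of x] jv_nonneg[of x "{}"] by linarith

lemma jn_le: "(\<And>P. P \<in> interval_families \<Longrightarrow> jv x P \<le> B) \<Longrightarrow> james_norm x \<le> B"
  unfolding jn_eq by (rule cSUP_least) (use fam_empty in auto)

lemma jn_less: "finite (supp x) \<Longrightarrow> y < james_norm x \<Longrightarrow> \<exists>P\<in>interval_families. y < jv x P"
  unfolding jn_eq using less_cSUP_iff[of interval_families "jv x" y] jv_bdd[of x] fam_empty by (metis empty_iff)

lemma jv_sq: "(jv x P)\<^sup>2 = (\<Sum>I\<in>P. (\<Sum>k\<in>I. x k)\<^sup>2)"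
  unfolding jv_def by (simp add: sum_nonneg)

lemma cs_card:
  fixes c :: "'a \<Rightarrow> real"
  shows "(\<Sum>i\<in>A. c i)\<^sup>2 \<le> real (card A) * (\<Sum>i\<in>A. (c i)\<^sup>2)"
  using Cauchy_Schwarz_ineq_sum[of "\<lambda>_. 1" c A] by simp


definition mn :: "(nat \<Rightarrow> nat \<Rightarrow> real) \<Rightarrow> nat \<Rightarrow> nat" where "mn xs n = Min (supp (xs n))"
definition mx :: "(nat \<Rightarrow> nat \<Rightarrow> real) \<Rightarrow> nat \<Rightarrow> nat" where "mx xs n = Max (supp (xs n))"

lemma blk_fin: "block_sequence xs \<Longrightarrow> finite (supp (xs n))"
  by (simp add: block_sequence_def)

lemma blk_ne: "block_sequence xs \<Longrightarrow> supp (xs n) \<noteq> {}"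
  unfolding block_sequence_def supp_def by (metis (mono_tags, lifting) empty_Collect_eq ext)

lemma blk_supp: "block_sequence xs \<Longrightarrow> supp (xs n) \<subseteq> {mn xs n..mx xs n}"
  using blk_fin[of xs n] blk_ne[of xs n] by (auto simp: mn_def mx_def)

lemma blk_zero: "block_sequence xs \<Longrightarrow> k \<notin> {mn xs n..mx xs n} \<Longrightarrow> xs n k = 0"
  using blk_supp[of xs n] by (auto simp: supp_def)

lemma blk_mle: "block_sequence xs \<Longrightarrow> mn xs n \<le> mx xs n"
  using blk_supp[of xs n] blk_ne[of xs n] by auto

lemma blk_order: assumes "block_sequence xs" "n < n'" shows "mx xs n < mn xs n'"
  using assms(2)
proof (induction n' rule: less_induct)
  case (less n')
  then obtain p where p: "n' = Suc p" by (cases n') auto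
  have step: "mx xs p < mn xs n'" using assms(1) p by (simp add: block_sequence_def mn_def mx_def)
  show ?case
  proof (cases "n = p")
    case True then show ?thesis using step by simp
  next
    case False
    then have "n < p" using less.prems p by simp
    then have "mx xs n < mn xs p" using less.IH p by simp
    then show ?thesis using step blk_mle[OF assms(1), of p] by linarith
  qed
qed

lemma blk_disj: "block_sequence xs \<Longrightarrow> n \<noteq> n' \<Longrightarrow> {mn xs n..mx xs n} \<inter> {mn xs n'..mx xs n'} = {}"
  using blk_order[of xs n n'] blk_order[of xs n' n] by (cases "n < n'") auto

lemma blk_sum_supp: assumes "block_sequence xs" "\<And>n. I_infty (xs n) = 0"
  shows "(\<Sum>k\<in>{mn xs n..mx xs n}. xs n k) = 0"
proof -
  have "I_infty (xs n) = (\<Sum>k\<in>{mn xs n..mx xs n}. xs n k)"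
    unfolding I_infty_def by (rule suminf_finite) (use blk_zero[OF assms(1)] in auto)
  then show ?thesis using assms(2) by simp
qed


lemma int_nz:
  assumes B: "block_sequence xs" "\<And>n. I_infty (xs n) = 0"
    and nz: "(\<Sum>k\<in>{a..b}. xs n k) \<noteq> 0"
  shows "(mn xs n < a \<and> a \<le> mx xs n) \<or> (mn xs n \<le> b \<and> b < mx xs n)"
proof (rule ccontr)
  assume c: "\<not> ?thesis"
  have eq: "(\<Sum>k\<in>{a..b}. xs n k) = (\<Sum>k\<in>{a..b} \<inter> {mn xs n..mx xs n}. xs n k)"
    by (rule sum.mono_neutral_right) (use blk_zero[OF B(1)] in auto)
  have "{a..b} \<inter> {mn xs n..mx xs n} = {mn xs n..mx xs n} \<or> {a..b} \<inter> {mn xs n..mx xs n} = {}"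
    using c blk_mle[OF B(1), of n] by auto
  then show False using nz eq blk_sum_supp[OF B] by auto
qed

lemma subsing: "(\<And>n n'. n \<in> A \<Longrightarrow> n' \<in> A \<Longrightarrow> n = n') \<Longrightarrow> \<exists>p. A \<subseteq> {p}"
  by blast

lemma card_nz:
  assumes B: "block_sequence xs" "\<And>n. I_infty (xs n) = 0"
  shows "finite {n. (\<Sum>k\<in>{a..b}. xs n k) \<noteq> 0} \<and> card {n. (\<Sum>k\<in>{a..b}. xs n k) \<noteq> 0} \<le> 2"
proof -
  obtain p where p: "{n. mn xs n < a \<and> a \<le> mx xs n} \<subseteq> {p}"
  proof -
    have "\<exists>p. {n. mn xs n < a \<and> a \<le> mx xs n} \<subseteq> {p}"
    proof (rule subsing)
      fix n n' assume "n \<in> {n. mn xs n < a \<and> a \<le> mx xs n}" "n' \<in> {n. mn xs n < a \<and> a \<le> mx xs n}"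
      then show "n = n'" using blk_order[OF B(1), of n n'] blk_order[OF B(1), of n' n]
        by (cases n n' rule: linorder_cases) auto
    qed
    then show ?thesis using that by blast
  qed
  obtain q where q: "{n. mn xs n \<le> b \<and> b < mx xs n} \<subseteq> {q}"
  proof -
    have "\<exists>p. {n. mn xs n \<le> b \<and> b < mx xs n} \<subseteq> {p}"
    proof (rule subsing)
      fix n n' assume "n \<in> {n. mn xs n \<le> b \<and> b < mx xs n}" "n' \<in> {n. mn xs n \<le> b \<and> b < mx xs n}"
      then show "n = n'" using blk_order[OF B(1), of n n'] blk_order[OF B(1), of n' n]
        by (cases n n' rule: linorder_cases) auto
    qed
    then show ?thesis using that by blast
  qed
  have sub: "{n. (\<Sum>k\<in>{a..b}. xs n k) \<noteq> 0} \<subseteq> {p, q}"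
    using int_nz[OF B] p q by blast
  have "card {p, q} \<le> 2" by (simp add: card_insert_le_m1)
  then show ?thesis using sub card_mono[OF _ sub] finite_subset[OF sub] by auto
qed

lemma upper_fam:
  assumes B: "block_sequence xs" "\<And>n. I_infty (xs n) = 0"
    and F: "finite F" and P: "P \<in> interval_families"
  shows "(jv (\<lambda>k. \<Sum>n\<in>F. lam n * xs n k) P)\<^sup>2 \<le> 2 * (\<Sum>n\<in>F. (lam n)\<^sup>2 * (james_norm (xs n))\<^sup>2)"
proof -
  have finP: "finite P" using P by (simp add: interval_families_def)
  have Iint: "\<And>I. I \<in> P \<Longrightarrow> \<exists>a b. I = {a..b}" using P by (auto simp: interval_families_def fin_interval_def)
  have perI: "(\<Sum>k\<in>I. \<Sum>n\<in>F. lam n * xs n k)\<^sup>2 \<le> 2 * (\<Sum>n\<in>F. (lam n)\<^sup>2 * (\<Sum>k\<in>I. xs n k)\<^sup>2)"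
    if I: "I \<in> P" for I
  proof -
    obtain a b where ab: "I = {a..b}" using Iint[OF I] by blast
    define c where "c n = lam n * (\<Sum>k\<in>I. xs n k)" for n
    define A where "A = {n\<in>F. c n \<noteq> 0}"
    have swap: "(\<Sum>k\<in>I. \<Sum>n\<in>F. lam n * xs n k) = (\<Sum>n\<in>F. c n)"
      unfolding c_def by (simp add: sum.swap[of _ I] sum_distrib_left)
    have AF: "A \<subseteq> F" and finA: "finite A" using F by (auto simp: A_def)
    have s1: "(\<Sum>n\<in>F. c n) = (\<Sum>n\<in>A. c n)"
      by (rule sum.mono_neutral_right[OF F AF]) (auto simp: A_def)
    have "A \<subseteq> {n. (\<Sum>k\<in>{a..b}. xs n k) \<noteq> 0}" by (auto simp: A_def c_def ab)
    then have cA: "card A \<le> 2" using card_nz[OF B, of a b] card_mono by (meson order_trans)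
    have "(\<Sum>n\<in>A. c n)\<^sup>2 \<le> real (card A) * (\<Sum>n\<in>A. (c n)\<^sup>2)" by (rule cs_card)
    also have "\<dots> \<le> 2 * (\<Sum>n\<in>A. (c n)\<^sup>2)"
      by (rule mult_right_mono) (use cA in \<open>auto simp: sum_nonneg\<close>)
    also have "(\<Sum>n\<in>A. (c n)\<^sup>2) \<le> (\<Sum>n\<in>F. (c n)\<^sup>2)"
      by (rule sum_mono2[OF F AF]) auto
    finally have "(\<Sum>n\<in>A. c n)\<^sup>2 \<le> 2 * (\<Sum>n\<in>F. (c n)\<^sup>2)" by simp
    then show ?thesis using swap s1 by (simp add: c_def power_mult_distrib)
  qed
  have "(jv (\<lambda>k. \<Sum>n\<in>F. lam n * xs n k) P)\<^sup>2 = (\<Sum>I\<in>P. (\<Sum>k\<in>I. \<Sum>n\<in>F. lam n * xs n k)\<^sup>2)"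
    by (simp add: jv_sq)
  also have "\<dots> \<le> (\<Sum>I\<in>P. 2 * (\<Sum>n\<in>F. (lam n)\<^sup>2 * (\<Sum>k\<in>I. xs n k)\<^sup>2))"
    by (rule sum_mono) (rule perI)
  also have "\<dots> = 2 * (\<Sum>n\<in>F. (lam n)\<^sup>2 * (\<Sum>I\<in>P. (\<Sum>k\<in>I. xs n k)\<^sup>2))"
    by (simp add: sum_distrib_left sum.swap[of _ P])
  also have "\<dots> \<le> 2 * (\<Sum>n\<in>F. (lam n)\<^sup>2 * (james_norm (xs n))\<^sup>2)"
  proof -
    have "(\<Sum>I\<in>P. (\<Sum>k\<in>I. xs n k)\<^sup>2) \<le> (james_norm (xs n))\<^sup>2" for n
    proof -
      have "jv (xs n) P \<le> james_norm (xs n)" by (rule jv_le_jn[OF blk_fin[OF B(1)] P])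
      then have "(jv (xs n) P)\<^sup>2 \<le> (james_norm (xs n))\<^sup>2"
        using jv_nonneg by (intro power_mono) auto
      then show ?thesis by (simp add: jv_sq)
    qed
    then show ?thesis by (intro mult_left_mono sum_mono mult_left_mono) auto
  qed
  finally show ?thesis .
qed


lemma x_on_R:
  assumes B: "block_sequence xs" and n: "n \<in> F" and F: "finite F" and k: "k \<in> {mn xs n..mx xs n}"
  shows "(\<Sum>n'\<in>F. lam n' * xs n' k) = lam n * xs n k"
proof -
  have "(\<Sum>n'\<in>F. lam n' * xs n' k) = lam n * xs n k + (\<Sum>n'\<in>F - {n}. lam n' * xs n' k)"
    by (rule sum.remove[OF F n])
  also have "(\<Sum>n'\<in>F - {n}. lam n' * xs n' k) = 0"
  proof (rule sum.neutral, intro ballI)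
    fix n' assume "n' \<in> F - {n}"
    then have "n' \<noteq> n" by simp
    then have "k \<notin> {mn xs n'..mx xs n'}" using blk_disj[OF B, of n n'] k by blast
    then show "lam n' * xs n' k = 0" using blk_zero[OF B] by simp
  qed
  finally show ?thesis by simp
qed

lemma restrict_fam:
  assumes P: "P \<in> interval_families"
  shows "((\<lambda>I. I \<inter> {c..d}) ` P - {{}}) \<in> interval_families"
proof -
  have finP: "finite P" and fi: "\<And>I. I\<in>P \<Longrightarrow> fin_interval I" and dj: "pairwise disjnt P"
    using P by (auto simp: interval_families_def)
  have "fin_interval J" if J: "J \<in> (\<lambda>I. I \<inter> {c..d}) ` P - {{}}" for J
  proof -
    obtain I where I: "I \<in> P" "J = I \<inter> {c..d}" "J \<noteq> {}" using J by blast
    obtain a b where "I = {a..b}" using fi[OF I(1)] by (auto simp: fin_interval_def)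
    then have "J = {max a c..min b d}" "max a c \<le> min b d" using I by auto
    then show ?thesis by (auto simp: fin_interval_def)
  qed
  moreover have "pairwise disjnt ((\<lambda>I. I \<inter> {c..d}) ` P - {{}})"
    using dj unfolding pairwise_def disjnt_def by blast
  ultimately show ?thesis using finP by (auto simp: interval_families_def)
qed

lemma restrict_sum:
  assumes B: "block_sequence xs" and P: "P \<in> interval_families"
  shows "(\<Sum>J\<in>(\<lambda>I. I \<inter> {mn xs n..mx xs n}) ` P - {{}}. (\<Sum>k\<in>J. xs n k)\<^sup>2) = (\<Sum>I\<in>P. (\<Sum>k\<in>I. xs n k)\<^sup>2)"
proof -
  let ?R = "{mn xs n..mx xs n}"
  let ?h = "\<lambda>I. I \<inter> ?R"
  let ?g = "\<lambda>J. (\<Sum>k\<in>J. xs n k)\<^sup>2"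
  have finP: "finite P" and dj: "pairwise disjnt P" and fI: "\<And>I. I \<in> P \<Longrightarrow> finite I"
    using P fam_finite_int by (auto simp: interval_families_def)
  have "(\<Sum>J\<in>?h ` P - {{}}. ?g J) = (\<Sum>J\<in>?h ` P. ?g J)"
    by (rule sum.mono_neutral_left) (use finP in auto)
  also have "\<dots> = (\<Sum>I\<in>P. (?g \<circ> ?h) I)"
  proof (rule sum.reindex_nontrivial[OF finP])
    fix I1 I2 assume "I1 \<in> P" "I2 \<in> P" "I1 \<noteq> I2" "?h I1 = ?h I2"
    then have "?h I1 = {}" using dj unfolding pairwise_def disjnt_def by blast
    then show "?g (?h I1) = 0" by simp
  qed
  also have "\<dots> = (\<Sum>I\<in>P. ?g I)"
  proof (rule sum.cong[OF refl])
    fix I assume I: "I \<in> P"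
    have "(\<Sum>k\<in>I. xs n k) = (\<Sum>k\<in>I \<inter> ?R. xs n k)"
      by (rule sum.mono_neutral_right) (use fI[OF I] blk_zero[OF B] in auto)
    then show "(?g \<circ> ?h) I = ?g I" by simp
  qed
  finally show ?thesis .
qed

lemma lower_fam:
  assumes B: "block_sequence xs" and F: "finite F" and P: "\<And>n. n \<in> F \<Longrightarrow> P n \<in> interval_families"
  shows "\<exists>Q\<in>interval_families. (jv (\<lambda>k. \<Sum>n\<in>F. lam n * xs n k) Q)\<^sup>2 = (\<Sum>n\<in>F. (lam n)\<^sup>2 * (jv (xs n) (P n))\<^sup>2)"
proof -
  define R where "R n = {mn xs n..mx xs n}" for n
  define Qn where "Qn n = (\<lambda>I. I \<inter> R n) ` P n - {{}}" for n
  define Q where "Q = (\<Union>n\<in>F. Qn n)"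
  define x where "x k = (\<Sum>n\<in>F. lam n * xs n k)" for k
  have Qfam: "Qn n \<in> interval_families" if "n \<in> F" for n
    unfolding Qn_def R_def by (rule restrict_fam[OF P[OF that]])
  have Qsub: "J \<subseteq> R n" "J \<noteq> {}" if "J \<in> Qn n" for J n using that by (auto simp: Qn_def)
  have Rdisj: "n \<noteq> n' \<Longrightarrow> R n \<inter> R n' = {}" for n n' unfolding R_def by (rule blk_disj[OF B])
  have Qdisj: "Qn n \<inter> Qn n' = {}" if "n \<noteq> n'" for n n'
    using Qsub Rdisj[OF that] by blast
  have finQ: "finite (Qn n)" if "n \<in> F" for n using Qfam[OF that] by (simp add: interval_families_def)
  have "Q \<in> interval_families"
  proof -
    have "finite Q" unfolding Q_def using F finQ by auto
    moreover have "\<forall>J\<in>Q. fin_interval J" unfolding Q_def using Qfam by (auto simp: interval_families_def)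
    moreover have "pairwise disjnt Q"
      unfolding pairwise_def Q_def
    proof (clarify)
      fix n J n' J' assume a: "n \<in> F" "J \<in> Qn n" "n' \<in> F" "J' \<in> Qn n'" "J \<noteq> J'"
      show "disjnt J J'"
      proof (cases "n = n'")
        case True then show ?thesis using Qfam[OF a(1)] a by (auto simp: interval_families_def pairwise_def)
      next
        case False then show ?thesis using Qsub[OF a(2)] Qsub[OF a(4)] Rdisj[OF False] by (auto simp: disjnt_def)
      qed
    qed
    ultimately show ?thesis by (simp add: interval_families_def)
  qed
  moreover have "(jv x Q)\<^sup>2 = (\<Sum>n\<in>F. (lam n)\<^sup>2 * (jv (xs n) (P n))\<^sup>2)"
  proof -
    have "(jv x Q)\<^sup>2 = (\<Sum>J\<in>Q. (\<Sum>k\<in>J. x k)\<^sup>2)" by (rule jv_sq)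
    also have "\<dots> = (\<Sum>n\<in>F. \<Sum>J\<in>Qn n. (\<Sum>k\<in>J. x k)\<^sup>2)"
      unfolding Q_def by (rule sum.UNION_disjoint) (use F finQ Qdisj in auto)
    also have "\<dots> = (\<Sum>n\<in>F. \<Sum>J\<in>Qn n. (lam n)\<^sup>2 * (\<Sum>k\<in>J. xs n k)\<^sup>2)"
    proof (intro sum.cong refl)
      fix n J assume "n \<in> F" "J \<in> Qn n"
      then have "(\<Sum>k\<in>J. x k) = (\<Sum>k\<in>J. lam n * xs n k)"
        unfolding x_def using x_on_R[OF B _ F] Qsub R_def by (intro sum.cong refl) blast
      then show "(\<Sum>k\<in>J. x k)\<^sup>2 = (lam n)\<^sup>2 * (\<Sum>k\<in>J. xs n k)\<^sup>2"
        by (simp add: sum_distrib_left[symmetric] power_mult_distrib)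
    qed
    also have "\<dots> = (\<Sum>n\<in>F. (lam n)\<^sup>2 * (jv (xs n) (P n))\<^sup>2)"
    proof (intro sum.cong refl)
      fix n assume n: "n \<in> F"
      have "(\<Sum>J\<in>Qn n. (\<Sum>k\<in>J. xs n k)\<^sup>2) = (\<Sum>I\<in>P n. (\<Sum>k\<in>I. xs n k)\<^sup>2)"
        unfolding Qn_def R_def by (rule restrict_sum[OF B P[OF n]])
      then show "(\<Sum>J\<in>Qn n. (lam n)\<^sup>2 * (\<Sum>k\<in>J. xs n k)\<^sup>2) = (lam n)\<^sup>2 * (jv (xs n) (P n))\<^sup>2"
        by (simp add: sum_distrib_left[symmetric] jv_sq)
    qed
    finally show ?thesis .
  qed
  ultimately show ?thesis unfolding x_def by blast
qed


theorem mainTheorem12: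
  fixes xs :: "nat \<Rightarrow> nat \<Rightarrow> real" and \<epsilon> \<alpha> :: real
  assumes "block_sequence xs"
    and "0 < \<epsilon>" and "\<epsilon> < 1" and "\<alpha> > 0"
    and "\<And>n. I_infty (xs n) = 0"
    and "\<And>n. \<bar>james_norm (xs n) - \<alpha>\<bar> < \<alpha> * \<epsilon>"
  shows "\<forall>lam :: nat \<Rightarrow> real. finite {n. lam n \<noteq> 0} \<longrightarrow>
           (1 - \<epsilon>) * \<alpha> * sqrt (\<Sum>n\<in>{n. lam n \<noteq> 0}. (lam n)\<^sup>2)
             \<le> james_norm (\<lambda>k. \<Sum>n\<in>{n. lam n \<noteq> 0}. lam n * xs n k) \<and>
           james_norm (\<lambda>k. \<Sum>n\<in>{n. lam n \<noteq> 0}. lam n * xs n k)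
             \<le> sqrt 2 * (1 + \<epsilon>) * \<alpha> * sqrt (\<Sum>n\<in>{n. lam n \<noteq> 0}. (lam n)\<^sup>2)"
proof (intro allI impI)
  fix lam :: "nat \<Rightarrow> real"
  assume finF: "finite {n. lam n \<noteq> 0}"
  define F where "F = {n. lam n \<noteq> 0}"
  define x where "x = (\<lambda>k. \<Sum>n\<in>F. lam n * xs n k)"
  define S where "S = (\<Sum>n\<in>F. (lam n)\<^sup>2)"
  have F: "finite F" using finF by (simp add: F_def)
  have B: "block_sequence xs" "\<And>n. I_infty (xs n) = 0" using assms by auto
  have S0: "S \<ge> 0" unfolding S_def by (simp add: sum_nonneg)
  have suppx: "finite (supp x)"
  proof (rule finite_subset)
    show "supp x \<subseteq> (\<Union>n\<in>F. supp (xs n))"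
    proof
      fix k assume "k \<in> supp x"
      then have "(\<Sum>n\<in>F. lam n * xs n k) \<noteq> 0" by (simp add: supp_def x_def)
      then obtain n where "n \<in> F" "lam n * xs n k \<noteq> 0" by (meson sum.neutral)
      then show "k \<in> (\<Union>n\<in>F. supp (xs n))" by (auto simp: supp_def)
    qed
    show "finite (\<Union>n\<in>F. supp (xs n))" using F blk_fin[OF B(1)] by auto
  qed
  have jlo: "(1 - \<epsilon>) * \<alpha> < james_norm (xs n)" for n using assms(6)[of n] by (auto simp: algebra_simps)
  have jhi: "james_norm (xs n) \<le> (1 + \<epsilon>) * \<alpha>" for n using assms(6)[of n] by (auto simp: algebra_simps)
  have c0: "0 \<le> (1 - \<epsilon>) * \<alpha>" using assms by simp
  have "\<forall>n. \<exists>P. P \<in> interval_families \<and> (1 - \<epsilon>) * \<alpha> < jv (xs n) P"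
    using jn_less[OF blk_fin[OF B(1)] jlo] by blast
  then obtain P where P: "\<And>n. P n \<in> interval_families" "\<And>n. (1 - \<epsilon>) * \<alpha> < jv (xs n) (P n)"
    by metis
  obtain Q where Q: "Q \<in> interval_families" "(jv x Q)\<^sup>2 = (\<Sum>n\<in>F. (lam n)\<^sup>2 * (jv (xs n) (P n))\<^sup>2)"
    using lower_fam[OF B(1) F, of P lam] P(1) unfolding x_def by blast
  have sc: "(\<Sum>n\<in>F. (lam n)\<^sup>2 * c\<^sup>2) = c\<^sup>2 * S" for c
    by (simp add: S_def sum_distrib_left mult.commute)
  have "((1 - \<epsilon>) * \<alpha> * sqrt S)\<^sup>2 = (\<Sum>n\<in>F. (lam n)\<^sup>2 * ((1 - \<epsilon>) * \<alpha>)\<^sup>2)"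
    unfolding sc by (simp only: power_mult_distrib real_sqrt_pow2[OF S0])
  also have "\<dots> \<le> (\<Sum>n\<in>F. (lam n)\<^sup>2 * (jv (xs n) (P n))\<^sup>2)"
  proof (intro sum_mono mult_left_mono)
    fix n show "((1 - \<epsilon>) * \<alpha>)\<^sup>2 \<le> (jv (xs n) (P n))\<^sup>2"
      using P(2)[of n] c0 by (intro power_mono) auto
  qed auto
  finally have "((1 - \<epsilon>) * \<alpha> * sqrt S)\<^sup>2 \<le> (jv x Q)\<^sup>2"
    using Q(2) by linarith
  then have "(1 - \<epsilon>) * \<alpha> * sqrt S \<le> jv x Q"
    by (rule power2_le_imp_le[OF _ jv_nonneg])
  also have "\<dots> \<le> james_norm x" by (rule jv_le_jn[OF suppx Q(1)])
  finally have lo: "(1 - \<epsilon>) * \<alpha> * sqrt S \<le> james_norm x" .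
  have hi: "james_norm x \<le> sqrt 2 * (1 + \<epsilon>) * \<alpha> * sqrt S"
  proof (rule jn_le)
    fix P' assume P': "P' \<in> interval_families"
    have "(jv x P')\<^sup>2 \<le> 2 * (\<Sum>n\<in>F. (lam n)\<^sup>2 * (james_norm (xs n))\<^sup>2)"
      unfolding x_def by (rule upper_fam[OF B F P'])
    also have "\<dots> \<le> 2 * (\<Sum>n\<in>F. (lam n)\<^sup>2 * ((1 + \<epsilon>) * \<alpha>)\<^sup>2)"
    proof (rule mult_left_mono, rule sum_mono)
      fix n show "(lam n)\<^sup>2 * (james_norm (xs n))\<^sup>2 \<le> (lam n)\<^sup>2 * ((1 + \<epsilon>) * \<alpha>)\<^sup>2"
        using jhi[of n] jn_nonneg[OF blk_fin[OF B(1)], of n] by (intro mult_left_mono power_mono) auto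
    qed auto
    also have "\<dots> = (sqrt 2 * (1 + \<epsilon>) * \<alpha> * sqrt S)\<^sup>2"
      unfolding sc by (simp only: power_mult_distrib real_sqrt_pow2[OF S0] mult_ac) simp
    finally have "(jv x P')\<^sup>2 \<le> (sqrt 2 * (1 + \<epsilon>) * \<alpha> * sqrt S)\<^sup>2" .
    moreover have "0 \<le> sqrt 2 * (1 + \<epsilon>) * \<alpha> * sqrt S" using assms S0 by simp
    ultimately show "jv x P' \<le> sqrt 2 * (1 + \<epsilon>) * \<alpha> * sqrt S"
      by (rule power2_le_imp_le)
  qed
  show "(1 - \<epsilon>) * \<alpha> * sqrt (\<Sum>n\<in>{n. lam n \<noteq> 0}. (lam n)\<^sup>2)
             \<le> james_norm (\<lambda>k. \<Sum>n\<in>{n. lam n \<noteq> 0}. lam n * xs n k) \<and>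
           james_norm (\<lambda>k. \<Sum>n\<in>{n. lam n \<noteq> 0}. lam n * xs n k)
             \<le> sqrt 2 * (1 + \<epsilon>) * \<alpha> * sqrt (\<Sum>n\<in>{n. lam n \<noteq> 0}. (lam n)\<^sup>2)"
    using lo hi unfolding x_def S_def F_def by simp
qed

end
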